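(* If a language $L \subseteq \mathbb{N}$ is computably succinct, then any functional property $\psi$ that $L$ captures is in $\Pi^0_2$.
   Context: Programs (generators) are identified with natural numbers in a fixed universal programming language; $\varphi_g$ is the partial computable function computed by $g$, and $|g|$ denotes the length of program $g$ (e.g. number of bits of its representation). $L$ being computably succinct means that there is a computable function $f$ such that for every program $g \in \mathbb{N}$ for which some functionally equivalent program exists in $L$, there is $g' \in L$ with $\varphi_{g'} = \varphi_g$ and $|g'| \le f(|g|)$ (in the argument this is used in the form $g' \le f(g)$, a bound on the index). A property $\psi \subseteq \mathbb{N}$ is functional if whenever $\varphi_g = \varphi_{g'}$, $\psi(g) \leftrightarrow \psi(g')$. $L$ captures $\psi$ if $L$ is decidable, every $g \in L$ satisfies $\psi$, and for every $g' \in \mathbb{N}$ satisfying $\psi$ there is $g \in L$ with $\varphi_g = \varphi_{g'}$. *)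

theory Defs
  imports Main "HOL-Library.Nat_Bijection"
begin

text \<open>Input is placed in register 0, all other registers
are 0, execution starts at instruction 0 and halts when the program counter leaves
the program; the output is the content of register 0.\<close>

datatype instr = INC nat | DEC nat nat

definition decode_instr :: "nat \<Rightarrow> instr" where
  "decode_instr n = (if even n then INC (n div 2)
                     else (case prod_decode (n div 2) of (r, j) \<Rightarrow> DEC r j))"

definition decode_prog :: "nat \<Rightarrow> instr list" where
  "decode_prog g = map decode_instr (list_decode g)"

type_synonym config = "nat \<times> (nat \<Rightarrow> nat)"

definition step :: "instr list \<Rightarrow> config \<Rightarrow> config" where
  "step p c = (case c of (pc, R) \<Rightarrow>
     if pc < length p then
       (case p ! pc of
          INC r \<Rightarrow> (Suc pc, R(r := Suc (R r)))
        | DEC r j \<Rightarrow> (if R r = 0 then (j, R) else (Suc pc, R(r := R r - 1))))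
     else (pc, R))"

definition run :: "nat \<Rightarrow> nat \<Rightarrow> nat \<Rightarrow> config" where
  "run g x n = (step (decode_prog g) ^^ n) (0, (\<lambda>_. 0)(0 := x))"

definition halted :: "nat \<Rightarrow> config \<Rightarrow> bool" where
  "halted g c \<longleftrightarrow> length (decode_prog g) \<le> fst c"

definition phi :: "nat \<Rightarrow> nat \<Rightarrow> nat option" where
  "phi g x = (if \<exists>n. halted g (run g x n)
              then Some (snd (run g x (LEAST n. halted g (run g x n))) 0)
              else None)"

fun plen :: "nat \<Rightarrow> nat" where
  "plen n = (if n < 2 then 1 else Suc (plen (n div 2)))"

definition computable :: "(nat \<Rightarrow> nat) \<Rightarrow> bool" where
  "computable f \<longleftrightarrow> (\<exists>g. \<forall>x. phi g x = Some (f x))"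

definition decidable :: "nat set \<Rightarrow> bool" where
  "decidable A \<longleftrightarrow> computable (\<lambda>x. if x \<in> A then 1 else 0)"

definition Pi02 :: "nat set \<Rightarrow> bool" where
  "Pi02 A \<longleftrightarrow> (\<exists>R. decidable R \<and>
     (\<forall>x. x \<in> A \<longleftrightarrow> (\<forall>y. \<exists>z. prod_encode (x, prod_encode (y, z)) \<in> R)))"

definition computably_succinct :: "nat set \<Rightarrow> bool" where
  "computably_succinct L \<longleftrightarrow> (\<exists>f. computable f \<and>
     (\<forall>g. (\<exists>g'\<in>L. phi g' = phi g) \<longrightarrow>
          (\<exists>g'\<in>L. phi g' = phi g \<and> plen g' \<le> f (plen g))))"

definition functional_prop :: "nat set \<Rightarrow> bool" where
  "functional_prop \<psi> \<longleftrightarrow> (\<forall>g g'. phi g = phi g' \<longrightarrow> (g \<in> \<psi> \<longleftrightarrow> g' \<in> \<psi>))"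

definition captures :: "nat set \<Rightarrow> nat set \<Rightarrow> bool" where
  "captures L \<psi> \<longleftrightarrow> decidable L \<and> (\<forall>g\<in>L. g \<in> \<psi>) \<and>
     (\<forall>g'. g' \<in> \<psi> \<longrightarrow> (\<exists>g\<in>L. phi g = phi g'))"

end

theory Submission
  imports Defs
begin

datatype cmd = Inc nat | Dc nat | Seq cmd cmd | Wh nat cmd

inductive bs :: "cmd \<Rightarrow> (nat \<Rightarrow> nat) \<Rightarrow> (nat \<Rightarrow> nat) \<Rightarrow> bool" where
  bInc: "bs (Inc r) R (R(r := Suc (R r)))"
| bDc: "bs (Dc r) R (R(r := R r - 1))"
| bSeq: "bs c1 R R1 \<Longrightarrow> bs c2 R1 R2 \<Longrightarrow> bs (Seq c1 c2) R R2"
| bWh0: "R r = 0 \<Longrightarrow> bs (Wh r c) R R"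
| bWh1: "R r \<noteq> 0 \<Longrightarrow> bs c R R1 \<Longrightarrow> bs (Wh r c) R1 R2 \<Longrightarrow> bs (Wh r c) R R2"

fun vars :: "cmd \<Rightarrow> nat set" where
  "vars (Inc r) = {r}" | "vars (Dc r) = {r}" | "vars (Seq c1 c2) = vars c1 \<union> vars c2"
| "vars (Wh r c) = insert r (vars c)"

fun maxv :: "cmd \<Rightarrow> nat" where
  "maxv (Inc r) = r" | "maxv (Dc r) = r" | "maxv (Seq c1 c2) = max (maxv c1) (maxv c2)"
| "maxv (Wh r c) = max r (maxv c)"

lemma vars_le: "r \<in> vars c \<Longrightarrow> r \<le> maxv c"
  by (induction c) auto

lemma bs_frame: "bs c R R' \<Longrightarrow> r \<notin> vars c \<Longrightarrow> R' r = R r"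
  by (induction rule: bs.induct) auto

fun shiftI :: "nat \<Rightarrow> instr \<Rightarrow> instr" where
  "shiftI k (INC r) = INC r" | "shiftI k (DEC r j) = DEC r (j + k)"

definition shift :: "nat \<Rightarrow> instr list \<Rightarrow> instr list" where
  "shift k p = map (shiftI k) p"

lemma shift0[simp]: "shift 0 p = p"
proof -
  have "shiftI 0 i = i" for i by (cases i) auto
  then show ?thesis unfolding shift_def by (simp add: map_idI)
qed

lemma length_shift[simp]: "length (shift k p) = length p"
  by (simp add: shift_def)

fun compile :: "nat \<Rightarrow> cmd \<Rightarrow> instr list" where
  "compile z (Inc r) = [INC r]"
| "compile z (Dc r) = [DEC r 1]"
| "compile z (Seq c1 c2) = compile z c1 @ shift (length (compile z c1)) (compile z c2)"
| "compile z (Wh r c) = [DEC r (length (compile z c) + 3), INC r] @ shift 2 (compile z c) @ [DEC z 0]"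

definition reach :: "instr list \<Rightarrow> config \<Rightarrow> config \<Rightarrow> bool" where
  "reach p c c' \<longleftrightarrow> (\<exists>n. (step p ^^ n) c = c')"

lemma reach_refl: "reach p c c"
  unfolding reach_def by (rule exI[of _ 0]) simp

lemma reach_step: "reach p (step p c) c' \<Longrightarrow> reach p c c'"
  unfolding reach_def by (metis funpow_Suc_right o_apply)

lemma reach_one: "step p c = c' \<Longrightarrow> reach p c c'"
  unfolding reach_def by (rule exI[of _ 1]) simp

lemma reach_trans: "reach p c1 c2 \<Longrightarrow> reach p c2 c3 \<Longrightarrow> reach p c1 c3"
  unfolding reach_def by (metis funpow_add o_apply)

lemma step_out: "length p \<le> pc \<Longrightarrow> step p (pc, R) = (pc, R)"
  by (simp add: step_def)

lemma step_embed:
  assumes "pc < length p"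
  shows "step (a @ shift (length a) p @ b) (length a + pc, R) =
         (case step p (pc, R) of (pc', R') \<Rightarrow> (length a + pc', R'))"
proof -
  have nth: "(shift (length a) p @ b) ! pc = shiftI (length a) (p ! pc)"
    using assms by (simp add: nth_append shift_def)
  show ?thesis using assms unfolding step_def
    by (cases "p ! pc") (auto simp: nth)
qed

lemma embed:
  "(step p ^^ n) (pc, R) = (length p, R') \<Longrightarrow>
   reach (a @ shift (length a) p @ b) (length a + pc, R) (length a + length p, R')"
proof (induction n arbitrary: pc R)
  case 0
  then show ?case by (simp add: reach_refl)
next
  case (Suc n)
  have e: "(step p ^^ n) (step p (pc, R)) = (length p, R')"
    using Suc.prems by (simp add: funpow_Suc_right del: funpow.simps)
  show ?case
  proof (cases "pc < length p")
    case True
    obtain pc' R1 where s: "step p (pc, R) = (pc', R1)" by fastforce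
    have "(step p ^^ n) (pc', R1) = (length p, R')"
      using e s by simp
    then have "reach (a @ shift (length a) p @ b) (length a + pc', R1) (length a + length p, R')"
      by (rule Suc.IH)
    moreover have "step (a @ shift (length a) p @ b) (length a + pc, R) = (length a + pc', R1)"
      using step_embed[OF True, of a b R] s by simp
    ultimately show ?thesis
      by (metis reach_step)
  next
    case False
    then have st: "step p (pc, R) = (pc, R)" by (simp add: step_out)
    have "(step p ^^ k) (pc, R) = (pc, R)" for k
      by (induction k) (simp_all add: st)
    then have "(pc, R) = (length p, R')" using e st by simp
    then show ?thesis by (simp add: reach_refl)
  qed
qed

lemma embed':
  "reach p (0, R) (length p, R') \<Longrightarrow> length a = k \<Longrightarrow>
   reach (a @ shift k p @ b) (k, R) (k + length p, R')"
  unfolding reach_def using embed[where p=p and pc=0 and R=R and R'=R' and a=a and b=b] by (auto simp: reach_def)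

lemma comp_correct:
  "bs c R R' \<Longrightarrow> R z = 0 \<Longrightarrow> z \<notin> vars c \<Longrightarrow> reach (compile z c) (0, R) (length (compile z c), R')"
proof (induction rule: bs.induct)
  case (bInc r R)
  show ?case by (rule reach_one) (auto simp: step_def fun_eq_iff)
next
  case (bDc r R)
  show ?case by (rule reach_one) (auto simp: step_def fun_eq_iff)
next
  case (bSeq c1 R R1 c2 R2)
  have r1: "reach (compile z c1) (0, R) (length (compile z c1), R1)" using bSeq by auto
  have "R1 z = 0" using bSeq bs_frame by fastforce
  then have r2: "reach (compile z c2) (0, R1) (length (compile z c2), R2)" using bSeq by auto
  have a: "reach (compile z (Seq c1 c2)) (0, R) (length (compile z c1), R1)"
    using embed'[OF r1, of "[]" 0 "shift (length (compile z c1)) (compile z c2)"] by simp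
  have b: "reach (compile z (Seq c1 c2)) (length (compile z c1), R1) (length (compile z (Seq c1 c2)), R2)"
    using embed'[OF r2, of "compile z c1" "length (compile z c1)" "[]"] by simp
  show ?case using reach_trans[OF a b] .
next
  case (bWh0 R r c)
  show ?case by (rule reach_one) (simp add: step_def bWh0)
next
  case (bWh1 R r c R1 R2)
  let ?p = "compile z (Wh r c)"
  let ?L = "length (compile z c)"
  have rb: "reach (compile z c) (0, R) (?L, R1)" using bWh1 by auto
  have z1: "R1 z = 0" using bWh1 bs_frame by fastforce
  have rl: "reach ?p (0, R1) (length ?p, R2)" using bWh1 z1 by auto
  have s01: "reach ?p (0, R) (2, R)"
    apply (rule reach_step)
    apply (rule reach_one)
    using bWh1(1) by (simp add: step_def)
  have sb: "reach ?p (2, R) (2 + ?L, R1)"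
    using embed'[OF rb, of "[DEC r (?L + 3), INC r]" 2 "[DEC z 0]"] by simp
  have sj: "reach ?p (2 + ?L, R1) (0, R1)"
    by (rule reach_one) (simp add: step_def z1 nth_append)
  show ?case using reach_trans[OF s01 reach_trans[OF sb reach_trans[OF sj rl]]] .
qed

lemma steps_halted: "length p \<le> fst c \<Longrightarrow> (step p ^^ k) c = c"
  by (induction k) (auto simp: step_out[of p "fst c" "snd c", simplified])

lemma phi_from_reach:
  assumes dp: "decode_prog g = p" and r: "reach p (0, (\<lambda>_. 0)(0 := x)) (length p, R')"
  shows "phi g x = Some (R' 0)"
proof -
  obtain n where n: "run g x n = (length p, R')"
    using r dp unfolding reach_def run_def by auto
  have h: "halted g (run g x n)" using n dp by (simp add: halted_def)
  then have ex: "\<exists>n. halted g (run g x n)" by blast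
  let ?m = "LEAST n. halted g (run g x n)"
  have hm: "halted g (run g x ?m)" using ex by (rule LeastI_ex)
  have mn: "?m \<le> n" using h by (rule Least_le)
  have "run g x n = (step p ^^ ((n - ?m) + ?m)) (0, (\<lambda>_. 0)(0 := x))"
    using mn unfolding run_def dp by simp
  also have "\<dots> = (step p ^^ (n - ?m)) (run g x ?m)"
    unfolding run_def dp funpow_add by simp
  also have "\<dots> = run g x ?m"
    using hm dp by (intro steps_halted) (simp add: halted_def)
  finally have "run g x ?m = (length p, R')" using n by simp
  then show ?thesis using ex unfolding phi_def by simp
qed

fun encI :: "instr \<Rightarrow> nat" where
  "encI (INC r) = 2 * r"
| "encI (DEC r j) = 2 * prod_encode (r, j) + 1"

lemma decode_encI: "decode_instr (encI i) = i"
  by (cases i) (auto simp: decode_instr_def)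

lemma decode_prog_enc: "decode_prog (list_encode (map encI p)) = p"
  by (simp add: decode_prog_def decode_encI map_idI)

definition computes :: "cmd \<Rightarrow> (nat \<Rightarrow> nat) \<Rightarrow> bool" where
  "computes c f \<longleftrightarrow> (\<forall>R. (\<forall>r\<in>vars c. r \<noteq> 0 \<longrightarrow> R r = 0) \<longrightarrow> bs c R (R(0 := f (R 0))))"

lemma computes_bs: "computes c f \<Longrightarrow> (\<And>r. r \<in> vars c \<Longrightarrow> r \<noteq> 0 \<Longrightarrow> R r = 0) \<Longrightarrow>
  bs c R (R(0 := f (R 0)))"
  unfolding computes_def by blast

definition wc :: "(nat \<Rightarrow> nat) \<Rightarrow> bool" where
  "wc f \<longleftrightarrow> (\<exists>c. computes c f)"

lemma wc_computable: "wc f \<Longrightarrow> computable f"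
proof -
  assume "wc f"
  then obtain c where c: "computes c f" unfolding wc_def by blast
  let ?z = "Suc (maxv c)"
  let ?p = "compile ?z c"
  have zn: "?z \<notin> vars c" using vars_le by fastforce
  have "phi (list_encode (map encI ?p)) x = Some (f x)" for x
  proof -
    let ?R = "(\<lambda>_. 0::nat)(0 := x)"
    have "bs c ?R (?R(0 := f (?R 0)))" using computes_bs[OF c, of "?R"] by simp
    then have "reach ?p (0, ?R) (length ?p, ?R(0 := f (?R 0)))"
      by (rule comp_correct) (use zn in auto)
    from phi_from_reach[OF decode_prog_enc this] show ?thesis by simp
  qed
  then show ?thesis unfolding computable_def by blast
qed

lemma bs_cong: "bs c R R1 \<Longrightarrow> R1 = R2 \<Longrightarrow> bs c R R2" by simp

definition clr :: "nat \<Rightarrow> cmd" where "clr r = Wh r (Dc r)"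
definition mv :: "nat \<Rightarrow> nat \<Rightarrow> cmd" where "mv a b = Wh a (Seq (Dc a) (Inc b))"
definition mv2 :: "nat \<Rightarrow> nat \<Rightarrow> nat \<Rightarrow> cmd" where
  "mv2 a b c = Wh a (Seq (Dc a) (Seq (Inc b) (Inc c)))"
definition cpy :: "nat \<Rightarrow> nat \<Rightarrow> nat \<Rightarrow> cmd" where "cpy a b t = Seq (mv2 a b t) (mv t a)"
definition encP :: "nat \<Rightarrow> nat \<Rightarrow> nat \<Rightarrow> nat \<Rightarrow> nat \<Rightarrow> cmd" where
  "encP a b w s u = Seq (mv2 a w s) (Seq (mv b s) (Wh s (Seq (cpy s w u) (Dc s))))"

lemma vars_clr[simp]: "vars (clr r) = {r}" by (simp add: clr_def)
lemma vars_mv[simp]: "vars (mv a b) = {a, b}" by (auto simp: mv_def)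
lemma vars_mv2[simp]: "vars (mv2 a b c) = {a, b, c}" by (auto simp: mv2_def)
lemma vars_cpy[simp]: "vars (cpy a b t) = {a, b, t}" by (auto simp: cpy_def)
lemma vars_encP[simp]: "vars (encP a b w s u) = {a, b, w, s, u}" by (auto simp: encP_def)

lemma bs_clr: "bs (clr r) R (R(r := 0))"
proof -
  have "R r = n \<Longrightarrow> bs (clr r) R (R(r := 0))" for n
  proof (induction n arbitrary: R)
    case 0
    show ?case unfolding clr_def by (rule bs_cong[OF bWh0]) (use 0 in auto)
  next
    case (Suc n)
    have a: "bs (Dc r) R (R(r := n))" using bDc[of r R] Suc.prems by simp
    have b: "bs (clr r) (R(r := n)) (R(r := 0))" by (rule bs_cong[OF Suc.IH]) auto
    show ?case unfolding clr_def by (rule bs_cong[OF bWh1[OF _ a b[unfolded clr_def]]]) (use Suc.prems in \<open>auto simp: fun_eq_iff\<close>)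
  qed
  then show ?thesis by blast
qed

lemma bs_mv: "a \<noteq> b \<Longrightarrow> bs (mv a b) R (R(a := 0, b := R b + R a))"
proof -
  assume ab: "a \<noteq> b"
  have "R a = n \<Longrightarrow> bs (mv a b) R (R(a := 0, b := R b + R a))" for n
  proof (induction n arbitrary: R)
    case 0
    show ?case unfolding mv_def by (rule bs_cong[OF bWh0]) (use 0 in \<open>auto simp: fun_eq_iff\<close>)
  next
    case (Suc n)
    let ?R1 = "R(a := n, b := Suc (R b))"
    have a: "bs (Seq (Dc a) (Inc b)) R ?R1"
      by (rule bSeq[OF bDc bs_cong[OF bInc]]) (use Suc.prems ab in \<open>auto simp: fun_eq_iff\<close>)
    have b: "bs (mv a b) ?R1 (R(a := 0, b := R b + R a))"
      by (rule bs_cong[OF Suc.IH]) (use Suc.prems ab in \<open>auto simp: fun_eq_iff\<close>)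
    show ?case unfolding mv_def by (rule bs_cong[OF bWh1[OF _ a b[unfolded mv_def]]]) (use Suc.prems in \<open>auto simp: fun_eq_iff\<close>)
  qed
  then show ?thesis by blast
qed

lemma bs_mv2: "distinct [a, b, c] \<Longrightarrow> bs (mv2 a b c) R (R(a := 0, b := R b + R a, c := R c + R a))"
proof -
  assume ab: "distinct [a, b, c]"
  have "R a = n \<Longrightarrow> bs (mv2 a b c) R (R(a := 0, b := R b + R a, c := R c + R a))" for n
  proof (induction n arbitrary: R)
    case 0
    show ?case unfolding mv2_def by (rule bs_cong[OF bWh0]) (use 0 in \<open>auto simp: fun_eq_iff\<close>)
  next
    case (Suc n)
    let ?R1 = "R(a := n, b := Suc (R b), c := Suc (R c))"
    have a: "bs (Seq (Dc a) (Seq (Inc b) (Inc c))) R ?R1"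
      by (rule bSeq[OF bDc bSeq[OF bInc bs_cong[OF bInc]]]) (use Suc.prems ab in \<open>auto simp: fun_eq_iff\<close>)
    have b: "bs (mv2 a b c) ?R1 (R(a := 0, b := R b + R a, c := R c + R a))"
      by (rule bs_cong[OF Suc.IH]) (use Suc.prems ab in \<open>auto simp: fun_eq_iff\<close>)
    show ?case unfolding mv2_def by (rule bs_cong[OF bWh1[OF _ a b[unfolded mv2_def]]]) (use Suc.prems in \<open>auto simp: fun_eq_iff\<close>)
  qed
  then show ?thesis by blast
qed

lemma bs_cpy: "distinct [a, b, t] \<Longrightarrow> R t = 0 \<Longrightarrow> bs (cpy a b t) R (R(b := R b + R a))"
  unfolding cpy_def
  by (rule bSeq[OF bs_mv2 bs_cong[OF bs_mv]]) (auto simp: fun_eq_iff)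

lemma bs_tri:
  assumes d: "distinct [s, w, u]" and u: "R u = 0" and n: "R s = n"
  shows "bs (Wh s (Seq (cpy s w u) (Dc s))) R (R(s := 0, w := R w + triangle n))"
  using u n
proof (induction n arbitrary: R)
  case 0
  show ?case by (rule bs_cong[OF bWh0]) (use 0 in \<open>auto simp: fun_eq_iff\<close>)
next
  case (Suc n)
  let ?R1 = "R(w := R w + Suc n, s := n)"
  have a: "bs (Seq (cpy s w u) (Dc s)) R ?R1"
    by (rule bSeq[OF bs_cpy bs_cong[OF bDc]]) (use Suc.prems d in \<open>auto simp: fun_eq_iff\<close>)
  have b: "bs (Wh s (Seq (cpy s w u) (Dc s))) ?R1 (R(s := 0, w := R w + triangle (Suc n)))"
    by (rule bs_cong[OF Suc.IH]) (use Suc.prems d in \<open>auto simp: fun_eq_iff\<close>)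
  show ?case by (rule bs_cong[OF bWh1[OF _ a b]]) (use Suc.prems in \<open>auto simp: fun_eq_iff\<close>)
qed

lemma bs_enc:
  assumes d: "distinct [a, b, w, s, u]" and z: "R w = 0" "R s = 0" "R u = 0"
  shows "bs (encP a b w s u) R (R(a := 0, b := 0, w := prod_encode (R a, R b)))"
proof -
  let ?R1 = "R(a := 0, w := R a, s := R a)"
  let ?R2 = "?R1(b := 0, s := R a + R b)"
  have s1: "bs (mv2 a w s) R ?R1" by (rule bs_cong[OF bs_mv2]) (use d z in \<open>auto simp: fun_eq_iff\<close>)
  have s2: "bs (mv b s) ?R1 ?R2" by (rule bs_cong[OF bs_mv]) (use d z in \<open>auto simp: fun_eq_iff\<close>)
  have s3: "bs (Wh s (Seq (cpy s w u) (Dc s))) ?R2 (R(a := 0, b := 0, w := prod_encode (R a, R b)))"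
    by (rule bs_cong[OF bs_tri[where n = "R a + R b"]])
       (use d z in \<open>auto simp: fun_eq_iff prod_encode_def\<close>)
  show ?thesis unfolding encP_def by (rule bSeq[OF s1 bSeq[OF s2 s3]])
qed

definition sp :: "nat \<times> nat \<Rightarrow> nat \<times> nat" where
  "sp p = (case p of (a, b) \<Rightarrow> if b = 0 then (0, Suc a) else (Suc a, b - 1))"

lemma prod_decode_sp: "prod_decode n = (sp ^^ n) (0, 0)"
proof (induction n)
  case 0
  then show ?case by (simp add: prod_decode_def prod_decode_aux.simps)
next
  case (Suc n)
  obtain a b where d: "prod_decode n = (a, b)" by fastforce
  have n: "n = prod_encode (a, b)" using prod_decode_inverse[of n] d by simp
  have "prod_encode (sp (a, b)) = Suc n"
    using n by (cases b) (auto simp: sp_def prod_encode_def)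
  then have "prod_decode (Suc n) = sp (a, b)" by (metis prod_encode_inverse)
  then show ?case using Suc d by simp
qed

definition STEP :: cmd where
  "STEP = Seq (cpy 2 3 4) (Seq (Inc 5) (Seq (Wh 3 (Seq (clr 3) (Seq (Inc 1) (Seq (Dc 2) (Dc 5)))))
            (Wh 5 (Seq (Dc 5) (Seq (mv 1 2) (Inc 2))))))"

lemma bs_STEP:
  assumes z: "R 3 = 0" "R 4 = 0" "R 5 = 0"
  shows "bs STEP R (R(1 := fst (sp (R 1, R 2)), 2 := snd (sp (R 1, R 2))))"
proof (cases "R 2")
  case 0
  let ?R2 = "R(5 := 1)"
  let ?R4 = "R(1 := 0, 2 := Suc (R 1))"
  have s1: "bs (cpy 2 3 4) R R" by (rule bs_cong[OF bs_cpy]) (use z 0 in \<open>auto simp: fun_eq_iff\<close>)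
  have s2: "bs (Inc 5) R ?R2" by (rule bs_cong[OF bInc]) (use z in \<open>auto simp: fun_eq_iff\<close>)
  have s3: "bs (Wh 3 (Seq (clr 3) (Seq (Inc 1) (Seq (Dc 2) (Dc 5))))) ?R2 ?R2"
    by (rule bWh0) (use z in simp)
  have b: "bs (Seq (Dc 5) (Seq (mv 1 2) (Inc 2))) ?R2 ?R4"
    by (rule bSeq[OF bDc bSeq[OF bs_mv bs_cong[OF bInc]]]) (use z 0 in \<open>auto simp: fun_eq_iff\<close>)
  have s4: "bs (Wh 5 (Seq (Dc 5) (Seq (mv 1 2) (Inc 2)))) ?R2 ?R4"
    by (rule bWh1[OF _ b bWh0]) (use z in simp_all)
  show ?thesis unfolding STEP_def
    by (rule bSeq[OF s1 bSeq[OF s2 bSeq[OF s3 bs_cong[OF s4]]]]) (use 0 in \<open>auto simp: sp_def\<close>)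
next
  case (Suc b)
  let ?R1 = "R(3 := Suc b)"
  let ?R2 = "?R1(5 := 1)"
  let ?R3 = "R(1 := Suc (R 1), 2 := b)"
  have s1: "bs (cpy 2 3 4) R ?R1" by (rule bs_cong[OF bs_cpy]) (use z Suc in \<open>auto simp: fun_eq_iff\<close>)
  have s2: "bs (Inc 5) ?R1 ?R2" by (rule bs_cong[OF bInc]) (use z in \<open>auto simp: fun_eq_iff\<close>)
  have b3: "bs (Seq (clr 3) (Seq (Inc 1) (Seq (Dc 2) (Dc 5)))) ?R2 ?R3"
    by (rule bSeq[OF bs_clr bSeq[OF bInc bSeq[OF bDc bs_cong[OF bDc]]]]) (use z Suc in \<open>auto simp: fun_eq_iff\<close>)
  have s3: "bs (Wh 3 (Seq (clr 3) (Seq (Inc 1) (Seq (Dc 2) (Dc 5))))) ?R2 ?R3"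
    by (rule bWh1[OF _ b3 bWh0]) (use z in simp_all)
  have s4: "bs (Wh 5 (Seq (Dc 5) (Seq (mv 1 2) (Inc 2)))) ?R3 ?R3"
    by (rule bWh0) (use z in simp)
  show ?thesis unfolding STEP_def
    by (rule bSeq[OF s1 bSeq[OF s2 bSeq[OF s3 bs_cong[OF s4]]]]) (use Suc in \<open>auto simp: sp_def fun_eq_iff\<close>)
qed

definition DLOOP :: cmd where "DLOOP = Wh 0 (Seq (Dc 0) STEP)"

lemma bs_DLOOP:
  assumes z: "R 3 = 0" "R 4 = 0" "R 5 = 0" and n: "R 0 = n"
  shows "bs DLOOP R (R(0 := 0, 1 := fst ((sp ^^ n) (R 1, R 2)), 2 := snd ((sp ^^ n) (R 1, R 2))))"
  using z n
proof (induction n arbitrary: R)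
  case 0
  show ?case unfolding DLOOP_def by (rule bs_cong[OF bWh0]) (use 0 in \<open>auto simp: fun_eq_iff\<close>)
next
  case (Suc n)
  let ?R1 = "R(0 := n)"
  let ?R2 = "?R1(1 := fst (sp (R 1, R 2)), 2 := snd (sp (R 1, R 2)))"
  have a: "bs (Seq (Dc 0) STEP) R ?R2"
    by (rule bSeq[OF bDc bs_cong[OF bs_STEP]]) (use Suc.prems in \<open>auto simp: fun_eq_iff\<close>)
  have b: "bs DLOOP ?R2 (R(0 := 0, 1 := fst ((sp ^^ Suc n) (R 1, R 2)), 2 := snd ((sp ^^ Suc n) (R 1, R 2))))"
    by (rule bs_cong[OF Suc.IH]) (use Suc.prems in \<open>auto simp: fun_eq_iff funpow_Suc_right simp del: funpow.simps\<close>)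
  show ?case unfolding DLOOP_def by (rule bs_cong[OF bWh1[OF _ a b[unfolded DLOOP_def]]]) (use Suc.prems in \<open>auto simp: fun_eq_iff\<close>)
qed

definition pr :: "nat \<Rightarrow> nat \<Rightarrow> nat" where "pr a b = prod_encode (a, b)"
definition p1 :: "nat \<Rightarrow> nat" where "p1 n = fst (prod_decode n)"
definition p2 :: "nat \<Rightarrow> nat" where "p2 n = snd (prod_decode n)"

lemma p1_pr[simp]: "p1 (pr a b) = a" by (simp add: p1_def pr_def)
lemma p2_pr[simp]: "p2 (pr a b) = b" by (simp add: p2_def pr_def)
lemma pr_p[simp]: "pr (p1 n) (p2 n) = n" by (simp add: p1_def p2_def pr_def)

lemma vars_DLOOP: "vars DLOOP = {0,1,2,3,4,5}"
  by (auto simp: DLOOP_def STEP_def)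

lemma computes_p1: "computes (Seq DLOOP (Seq (mv 1 0) (clr 2))) p1"
  unfolding computes_def
proof (intro allI impI)
  fix R :: "nat \<Rightarrow> nat" assume pre: "\<forall>r\<in>vars (Seq DLOOP (Seq (mv 1 0) (clr 2))). r \<noteq> 0 \<longrightarrow> R r = 0"
  then have z: "R 1 = 0" "R 2 = 0" "R 3 = 0" "R 4 = 0" "R 5 = 0" by (auto simp: vars_DLOOP)
  show "bs (Seq DLOOP (Seq (mv 1 0) (clr 2))) R (R(0 := p1 (R 0)))"
    by (rule bSeq[OF bs_DLOOP bSeq[OF bs_mv bs_cong[OF bs_clr]]])
       (use z in \<open>auto simp: fun_eq_iff p1_def prod_decode_sp\<close>)
qed

lemma computes_p2: "computes (Seq DLOOP (Seq (mv 2 0) (clr 1))) p2"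
  unfolding computes_def
proof (intro allI impI)
  fix R :: "nat \<Rightarrow> nat" assume pre: "\<forall>r\<in>vars (Seq DLOOP (Seq (mv 2 0) (clr 1))). r \<noteq> 0 \<longrightarrow> R r = 0"
  then have z: "R 1 = 0" "R 2 = 0" "R 3 = 0" "R 4 = 0" "R 5 = 0" by (auto simp: vars_DLOOP)
  show "bs (Seq DLOOP (Seq (mv 2 0) (clr 1))) R (R(0 := p2 (R 0)))"
    by (rule bSeq[OF bs_DLOOP bSeq[OF bs_mv bs_cong[OF bs_clr]]])
       (use z in \<open>auto simp: fun_eq_iff p2_def prod_decode_sp\<close>)
qed

lemma wc_Suc: "wc Suc"
  unfolding wc_def computes_def
  by (rule exI[of _ "Inc 0"]) (auto intro: bs_cong[OF bInc])

lemma wc_pred: "wc (\<lambda>x. x - 1)"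
  unfolding wc_def computes_def
  by (rule exI[of _ "Dc 0"]) (auto intro: bs_cong[OF bDc])

lemma wc_zero: "wc (\<lambda>x. 0)"
  unfolding wc_def computes_def
  by (rule exI[of _ "clr 0"]) (auto intro: bs_cong[OF bs_clr])

lemma wc_id: "wc (\<lambda>x. x)"
  unfolding wc_def computes_def
  by (rule exI[of _ "Seq (Inc 0) (Dc 0)"]) (auto intro!: bSeq[OF bInc bs_cong[OF bDc]])

lemma wc_comp: assumes "wc f" "wc g" shows "wc (\<lambda>x. f (g x))"
proof -
  obtain cf cg where cf: "computes cf f" and cg: "computes cg g" using assms unfolding wc_def by blast
  have "computes (Seq cg cf) (\<lambda>x. f (g x))"
    unfolding computes_def
  proof (intro allI impI)
    fix R :: "nat \<Rightarrow> nat" assume pre: "\<forall>r\<in>vars (Seq cg cf). r \<noteq> 0 \<longrightarrow> R r = 0"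
    have a: "bs cg R (R(0 := g (R 0)))" by (rule computes_bs[OF cg]) (use pre in auto)
    have b: "bs cf (R(0 := g (R 0))) ((R(0 := g (R 0)))(0 := f ((R(0 := g (R 0))) 0)))"
      by (rule computes_bs[OF cf]) (use pre in auto)
    show "bs (Seq cg cf) R (R(0 := f (g (R 0))))" using bSeq[OF a b] by simp
  qed
  then show ?thesis unfolding wc_def by blast
qed

lemma wc_p1: "wc p1" using computes_p1 unfolding wc_def by blast
lemma wc_p2: "wc p2" using computes_p2 unfolding wc_def by blast

lemma wc_pair: assumes "wc f" "wc g" shows "wc (\<lambda>x. pr (f x) (g x))"
proof -
  obtain cf cg where cf: "computes cf f" and cg: "computes cg g" using assms unfolding wc_def by blast
  define K where "K = Suc (max (maxv cf) (maxv cg))"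
  define P where "P = Seq (cpy 0 K (K+2)) (Seq cf (Seq (mv 0 (K+1)) (Seq (mv K 0)
     (Seq cg (Seq (mv 0 K) (encP (K+1) K 0 (K+2) (K+3)))))))"
  have fK: "r \<in> vars cf \<Longrightarrow> r < K" for r using vars_le[of r cf] by (simp add: K_def)
  have gK: "r \<in> vars cg \<Longrightarrow> r < K" for r using vars_le[of r cg] by (simp add: K_def)
  have K0: "K \<noteq> 0" by (simp add: K_def)
  have "computes P (\<lambda>x. pr (f x) (g x))"
    unfolding computes_def
  proof (intro allI impI)
    fix R :: "nat \<Rightarrow> nat" assume pre: "\<forall>r\<in>vars P. r \<noteq> 0 \<longrightarrow> R r = 0"
    have z: "R K = 0" "R (K+1) = 0" "R (K+2) = 0" "R (K+3) = 0" using pre K0 by (auto simp: P_def)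
    have zf: "r \<in> vars cf \<Longrightarrow> r \<noteq> 0 \<Longrightarrow> R r = 0" for r using pre by (auto simp: P_def)
    have zg: "r \<in> vars cg \<Longrightarrow> r \<noteq> 0 \<Longrightarrow> R r = 0" for r using pre by (auto simp: P_def)
    define x where "x = R 0"
    define R1 where "R1 = R(K := x)"
    define R2 where "R2 = R1(0 := f x)"
    define R3 where "R3 = R2(0 := 0, K+1 := f x)"
    define R4 where "R4 = R3(K := 0, 0 := x)"
    define R5 where "R5 = R4(0 := g x)"
    define R6 where "R6 = R5(0 := 0, K := g x)"
    define R7 where "R7 = R6(K+1 := 0, K := 0, 0 := pr (f x) (g x))"
    have s1: "bs (cpy 0 K (K+2)) R R1"
      by (rule bs_cong[OF bs_cpy]) (use z K0 in \<open>auto simp: R1_def x_def fun_eq_iff\<close>)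
    have s2: "bs cf R1 R2"
      by (rule bs_cong[OF computes_bs[OF cf]]) (use zf fK K0 in \<open>fastforce simp: R1_def R2_def x_def fun_eq_iff\<close>)+
    have s3: "bs (mv 0 (K+1)) R2 R3"
      by (rule bs_cong[OF bs_mv]) (use z K0 in \<open>auto simp: R1_def R2_def R3_def fun_eq_iff\<close>)
    have s4: "bs (mv K 0) R3 R4"
      by (rule bs_cong[OF bs_mv]) (use z K0 in \<open>auto simp: R1_def R2_def R3_def R4_def fun_eq_iff\<close>)
    have s5: "bs cg R4 R5"
      by (rule bs_cong[OF computes_bs[OF cg]])
         (use zg gK K0 z in \<open>fastforce simp: R1_def R2_def R3_def R4_def R5_def x_def fun_eq_iff\<close>)+
    have s6: "bs (mv 0 K) R5 R6"
      by (rule bs_cong[OF bs_mv]) (use z K0 in \<open>auto simp: R1_def R2_def R3_def R4_def R5_def R6_def fun_eq_iff\<close>)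
    have s7: "bs (encP (K+1) K 0 (K+2) (K+3)) R6 R7"
      by (rule bs_cong[OF bs_enc])
         (use z K0 in \<open>auto simp: R1_def R2_def R3_def R4_def R5_def R6_def R7_def pr_def fun_eq_iff\<close>)
    have e: "R7 = R(0 := pr (f (R 0)) (g (R 0)))"
      using z by (auto simp: R1_def R2_def R3_def R4_def R5_def R6_def R7_def x_def fun_eq_iff)
    show "bs P R (R(0 := pr (f (R 0)) (g (R 0))))"
      unfolding P_def e[symmetric]
      by (rule bSeq[OF s1 bSeq[OF s2 bSeq[OF s3 bSeq[OF s4 bSeq[OF s5 bSeq[OF s6 s7]]]]]])
  qed
  then show ?thesis unfolding wc_def by blast
qed

definition wloop :: "(nat \<Rightarrow> nat) \<Rightarrow> (nat \<Rightarrow> nat) \<Rightarrow> nat \<Rightarrow> nat" where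
  "wloop t h x = (h ^^ (LEAST n. t ((h ^^ n) x) = 0)) x"

lemma wloop_0: "t x = 0 \<Longrightarrow> wloop t h x = x"
  unfolding wloop_def by (subst Least_eq_0) auto

lemma wloop_Suc: assumes "t x \<noteq> 0" "t ((h ^^ n) x) = 0" shows "wloop t h x = wloop t h (h x)"
proof -
  have "(LEAST n. t ((h ^^ n) x) = 0) = Suc (LEAST m. t ((h ^^ Suc m) x) = 0)"
    by (rule Least_Suc[of "\<lambda>n. t ((h ^^ n) x) = 0", OF assms(2)]) (use assms(1) in simp)
  then show ?thesis unfolding wloop_def by (simp add: funpow_Suc_right del: funpow.simps)
qed

lemma wc_wloop:
  assumes "wc t" "wc h" and trm: "\<And>x. \<exists>n. t ((h ^^ n) x) = 0"
  shows "wc (wloop t h)"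
proof -
  obtain ct ch where ct: "computes ct t" and ch: "computes ch h" using assms unfolding wc_def by blast
  define K where "K = Suc (max (maxv ct) (maxv ch))"
  define PRE where "PRE = Seq (cpy 0 K (K+2)) (Seq ct (Seq (mv 0 (K+1)) (mv K 0)))"
  define BODY where "BODY = Seq (clr (K+1)) (Seq ch PRE)"
  define P where "P = Seq PRE (Wh (K+1) BODY)"
  have tK: "r \<in> vars ct \<Longrightarrow> r < K" for r using vars_le[of r ct] by (simp add: K_def)
  have hK: "r \<in> vars ch \<Longrightarrow> r < K" for r using vars_le[of r ch] by (simp add: K_def)
  have K0: "K \<noteq> 0" by (simp add: K_def)
  have pre_ok: "bs PRE S (S(K+1 := t (S 0)))"
    if z: "S K = 0" "S (K+1) = 0" "S (K+2) = 0" and zt: "\<And>r. r \<in> vars ct \<Longrightarrow> r \<noteq> 0 \<Longrightarrow> S r = 0"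
    for S
  proof -
    define x where "x = S 0"
    define S1 where "S1 = S(K := x)"
    define S2 where "S2 = S1(0 := t x)"
    define S3 where "S3 = S2(0 := 0, K+1 := t x)"
    define S4 where "S4 = S3(K := 0, 0 := x)"
    have s1: "bs (cpy 0 K (K+2)) S S1"
      by (rule bs_cong[OF bs_cpy]) (use z K0 in \<open>auto simp: S1_def x_def fun_eq_iff\<close>)
    have s2: "bs ct S1 S2"
      by (rule bs_cong[OF computes_bs[OF ct]]) (use zt tK K0 in \<open>fastforce simp: S1_def S2_def x_def fun_eq_iff\<close>)+
    have s3: "bs (mv 0 (K+1)) S2 S3"
      by (rule bs_cong[OF bs_mv]) (use z K0 in \<open>auto simp: S1_def S2_def S3_def fun_eq_iff\<close>)
    have s4: "bs (mv K 0) S3 S4"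
      by (rule bs_cong[OF bs_mv]) (use z K0 in \<open>auto simp: S1_def S2_def S3_def S4_def fun_eq_iff\<close>)
    have e: "S4 = S(K+1 := t (S 0))"
      using z by (auto simp: S1_def S2_def S3_def S4_def x_def fun_eq_iff)
    show ?thesis unfolding PRE_def e[symmetric]
      by (rule bSeq[OF s1 bSeq[OF s2 bSeq[OF s3 s4]]])
  qed
  have loop: "bs (Wh (K+1) BODY) (S(0 := y, K+1 := t y)) (S(0 := wloop t h y))"
    if z: "S K = 0" "S (K+1) = 0" "S (K+2) = 0"
      and zt: "\<And>r. r \<in> vars ct \<Longrightarrow> r \<noteq> 0 \<Longrightarrow> S r = 0"
      and zh: "\<And>r. r \<in> vars ch \<Longrightarrow> r \<noteq> 0 \<Longrightarrow> S r = 0"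
      and n: "t ((h ^^ n) y) = 0"
    for S n y
    using n
  proof (induction n arbitrary: y)
    case 0
    then have "t y = 0" by simp
    then show ?case by (intro bs_cong[OF bWh0]) (use z K0 in \<open>auto simp: wloop_0 fun_eq_iff\<close>)
  next
    case (Suc n)
    show ?case
    proof (cases "t y = 0")
      case True
      then show ?thesis by (intro bs_cong[OF bWh0]) (use z K0 in \<open>auto simp: wloop_0 fun_eq_iff\<close>)
    next
      case False
      have tn: "t ((h ^^ n) (h y)) = 0" using Suc.prems by (simp add: funpow_Suc_right del: funpow.simps)
      have b1: "bs (clr (K+1)) (S(0 := y, K+1 := t y)) (S(0 := y))"
        by (rule bs_cong[OF bs_clr]) (use z in \<open>auto simp: fun_eq_iff\<close>)
      have b2: "bs ch (S(0 := y)) (S(0 := h y))"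
        by (rule bs_cong[OF computes_bs[OF ch]]) (use zh hK in \<open>auto simp: fun_eq_iff\<close>)
      have b3: "bs PRE (S(0 := h y)) (S(0 := h y, K+1 := t (h y)))"
        by (rule bs_cong[OF pre_ok]) (use z zt K0 in \<open>auto simp: fun_eq_iff\<close>)
      have b: "bs BODY (S(0 := y, K+1 := t y)) (S(0 := h y, K+1 := t (h y)))"
        unfolding BODY_def by (rule bSeq[OF b1 bSeq[OF b2 b3]])
      have w: "wloop t h y = wloop t h (h y)" by (rule wloop_Suc[OF False Suc.prems])
      show ?thesis unfolding w by (rule bWh1[OF _ b Suc.IH[OF tn]]) (use False K0 in simp)
    qed
  qed
  have "computes P (wloop t h)"
    unfolding computes_def
  proof (intro allI impI)
    fix R :: "nat \<Rightarrow> nat" assume pre: "\<forall>r\<in>vars P. r \<noteq> 0 \<longrightarrow> R r = 0"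
    have z: "R K = 0" "R (K+1) = 0" "R (K+2) = 0" using pre K0 by (auto simp: P_def PRE_def)
    have zt: "r \<in> vars ct \<Longrightarrow> r \<noteq> 0 \<Longrightarrow> R r = 0" for r using pre by (auto simp: P_def PRE_def)
    have zh: "r \<in> vars ch \<Longrightarrow> r \<noteq> 0 \<Longrightarrow> R r = 0" for r using pre by (auto simp: P_def PRE_def BODY_def)
    obtain n where n: "t ((h ^^ n) (R 0)) = 0" using trm by blast
    have a: "bs PRE R (R(K+1 := t (R 0)))" by (rule pre_ok[OF z zt])
    have b: "bs (Wh (K+1) BODY) (R(K+1 := t (R 0))) (R(0 := wloop t h (R 0)))"
      using loop[OF z zt zh n] by simp
    show "bs P R (R(0 := wloop t h (R 0)))" unfolding P_def by (rule bSeq[OF a b])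
  qed
  then show ?thesis unfolding wc_def by blast
qed

lemma wc_const: "wc (\<lambda>x. k)"
proof (induction k)
  case 0 then show ?case by (rule wc_zero)
next
  case (Suc k) then show ?case using wc_comp[OF wc_Suc Suc.IH] by simp
qed

lemma wc_Suc': "wc f \<Longrightarrow> wc (\<lambda>x. Suc (f x))" using wc_comp[OF wc_Suc] .
lemma wc_pred': "wc f \<Longrightarrow> wc (\<lambda>x. f x - 1)" using wc_comp[OF wc_pred] .
lemma wc_p1': "wc f \<Longrightarrow> wc (\<lambda>x. p1 (f x))" using wc_comp[OF wc_p1] .
lemma wc_p2': "wc f \<Longrightarrow> wc (\<lambda>x. p2 (f x))" using wc_comp[OF wc_p2] .

lemma wc_pred'': "wc f \<Longrightarrow> wc (\<lambda>x. f x - Suc 0)" using wc_comp[OF wc_pred] by simp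

lemma wc_cong: "wc f \<Longrightarrow> (\<And>x. f x = g x) \<Longrightarrow> wc g"
proof -
  assume "wc f" "\<And>x. f x = g x"
  then have "f = g" by (simp add: fun_eq_iff)
  with \<open>wc f\<close> show ?thesis by simp
qed

lemma wc_bin: "wc (\<lambda>s. F (p1 s) (p2 s)) \<Longrightarrow> wc f \<Longrightarrow> wc g \<Longrightarrow> wc (\<lambda>x. F (f x) (g x))"
  using wc_comp[OF _ wc_pair, of "\<lambda>s. F (p1 s) (p2 s)" f g] by simp

lemma wc_tailrec:
  fixes \<mu> :: "nat \<Rightarrow> nat"
  assumes "wc t" "wc h" "wc e" and dec: "\<And>x. t x \<noteq> 0 \<Longrightarrow> \<mu> (h x) < \<mu> x"
    and eq: "\<And>x. F x = (if t x = 0 then e x else F (h x))"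
  shows "wc F"
proof -
  have trm: "\<exists>n. t ((h ^^ n) x) = 0" for x
  proof (induction x rule: measure_induct_rule[of \<mu>])
    case (less x)
    show ?case
    proof (cases "t x = 0")
      case True then show ?thesis by (intro exI[of _ 0]) simp
    next
      case False
      then obtain n where "t ((h ^^ n) (h x)) = 0" using less dec by blast
      then show ?thesis by (intro exI[of _ "Suc n"]) (simp add: funpow_Suc_right del: funpow.simps)
    qed
  qed
  have Fe: "F x = e (wloop t h x)" for x
  proof (induction x rule: measure_induct_rule[of \<mu>])
    case (less x)
    show ?case
    proof (cases "t x = 0")
      case True then show ?thesis using eq[of x] by (simp add: wloop_0)
    next
      case False
      obtain n where n: "t ((h ^^ n) x) = 0" using trm by blast
      have "F x = F (h x)" using eq[of x] False by simp
      also have "\<dots> = e (wloop t h (h x))" using less dec False by blast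
      also have "\<dots> = e (wloop t h x)" using wloop_Suc[OF False n] by simp
      finally show ?thesis .
    qed
  qed
  have "wc (\<lambda>x. e (wloop t h x))" by (rule wc_comp[OF assms(3) wc_wloop[OF assms(1,2) trm]])
  moreover have "F = (\<lambda>x. e (wloop t h x))" using Fe by (simp add: fun_eq_iff)
  ultimately show ?thesis by simp
qed

lemmas wc_basic = wc_p1 wc_p2 wc_const wc_id wc_Suc' wc_pred' wc_pred'' wc_p1' wc_p2' wc_pair

lemma wc_if0:
  assumes "wc a" "wc b" "wc c"
  shows "wc (\<lambda>x. if a x = 0 then b x else c x)"
proof -
  define G where "G s = (if p1 s = 0 then p1 (p2 s) else p2 (p2 s))" for s
  have "wc G"
    by (rule wc_tailrec[where t = p1 and h = "\<lambda>s. pr 0 (pr (p2 (p2 s)) 0)" and e = "\<lambda>s. p1 (p2 s)" and \<mu> = p1])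
       (auto simp: G_def intro!: wc_basic)
  show ?thesis
    by (rule wc_cong[OF wc_comp[OF \<open>wc G\<close> wc_pair[OF assms(1) wc_pair[OF assms(2,3)]]]]) (auto simp: G_def)
qed

definition wcp :: "(nat \<Rightarrow> bool) \<Rightarrow> bool" where
  "wcp P \<longleftrightarrow> wc (\<lambda>x. if P x then 1 else 0)"

lemma wc_if: assumes "wcp P" "wc f" "wc g" shows "wc (\<lambda>x. if P x then f x else g x)"
proof -
  have "wc (\<lambda>x. if (if P x then 1 else 0) = (0::nat) then g x else f x)"
    using wc_if0[OF assms(1)[unfolded wcp_def] assms(3,2)] .
  then show ?thesis by (rule wc_cong) auto
qed

lemma wc_add: assumes "wc f" "wc g" shows "wc (\<lambda>x. f x + g x)"
proof -
  have "wc (\<lambda>s. p1 s + p2 s)"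
    by (rule wc_tailrec[where t = p1 and h = "\<lambda>s. pr (p1 s - 1) (Suc (p2 s))" and e = p2 and \<mu> = p1])
       (auto intro!: wc_basic)
  from wc_bin[where F = "\<lambda>a b. a + b", OF this assms] show ?thesis .
qed

lemma wc_sub: assumes "wc f" "wc g" shows "wc (\<lambda>x. f x - g x)"
proof -
  have "wc (\<lambda>s. p1 s - p2 s)"
    by (rule wc_tailrec[where t = p2 and h = "\<lambda>s. pr (p1 s - 1) (p2 s - 1)" and e = p1 and \<mu> = p2])
       (auto intro!: wc_basic)
  from wc_bin[where F = "\<lambda>a b. a - b", OF this assms] show ?thesis .
qed

lemma wcp_eq: assumes "wc f" "wc g" shows "wcp (\<lambda>x. f x = g x)"
proof -
  have "wc (\<lambda>x. if (f x - g x) + (g x - f x) = 0 then 1 else 0)"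
    by (intro wc_if0 wc_add wc_sub assms wc_const)
  then show ?thesis unfolding wcp_def by (rule wc_cong) auto
qed

lemma wcp_le: assumes "wc f" "wc g" shows "wcp (\<lambda>x. f x \<le> g x)"
proof -
  have "wc (\<lambda>x. if f x - g x = 0 then 1 else 0)"
    by (intro wc_if0 wc_sub assms wc_const)
  then show ?thesis unfolding wcp_def by (rule wc_cong) auto
qed

lemma wcp_less: assumes "wc f" "wc g" shows "wcp (\<lambda>x. f x < g x)"
  using wcp_le[OF wc_Suc'[OF assms(1)] assms(2)] by (simp add: Suc_le_eq)

lemma wcp_not: "wcp P \<Longrightarrow> wcp (\<lambda>x. \<not> P x)"
  unfolding wcp_def by (rule wc_cong[OF wc_if[of P "\<lambda>x. 0" "\<lambda>x. 1"]]) (auto simp: wcp_def wc_const)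

lemma wcp_conj: "wcp P \<Longrightarrow> wcp Q \<Longrightarrow> wcp (\<lambda>x. P x \<and> Q x)"
  unfolding wcp_def by (rule wc_cong[OF wc_if[of P "\<lambda>x. if Q x then 1 else 0" "\<lambda>x. 0"]]) (auto simp: wcp_def wc_const)

lemma wcp_disj: "wcp P \<Longrightarrow> wcp Q \<Longrightarrow> wcp (\<lambda>x. P x \<or> Q x)"
  unfolding wcp_def by (rule wc_cong[OF wc_if[of P "\<lambda>x. 1" "\<lambda>x. if Q x then 1 else 0"]]) (auto simp: wcp_def wc_const)

lemma wcp_imp: "wcp P \<Longrightarrow> wcp Q \<Longrightarrow> wcp (\<lambda>x. P x \<longrightarrow> Q x)"
  unfolding wcp_def by (rule wc_cong[OF wc_if[of P "\<lambda>x. if Q x then 1 else 0" "\<lambda>x. 1"]]) (auto simp: wcp_def wc_const)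

lemma wcp_bin: "wcp (\<lambda>s. P (p1 s) (p2 s)) \<Longrightarrow> wc f \<Longrightarrow> wc g \<Longrightarrow> wcp (\<lambda>x. P (f x) (g x))"
  unfolding wcp_def by (rule wc_bin[where F = "\<lambda>a b. if P a b then 1 else 0"])

lemma wc_iter:
  assumes H: "wc (\<lambda>q. H (p1 q) (p2 q))" and "wc a" "wc n" "wc s"
  shows "wc (\<lambda>x. (H (a x) ^^ n x) (s x))"
proof -
  define G where "G st = (H (p1 st) ^^ p1 (p2 st)) (p2 (p2 st))" for st
  have hw: "wc (\<lambda>st. H (p1 st) (p2 (p2 st)))"
    by (rule wc_bin[OF H]) (intro wc_basic)+
  have "wc G"
  proof (rule wc_tailrec[where t = "\<lambda>st. p1 (p2 st)" and e = "\<lambda>st. p2 (p2 st)" and \<mu> = "\<lambda>st. p1 (p2 st)"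
        and h = "\<lambda>st. pr (p1 st) (pr (p1 (p2 st) - 1) (H (p1 st) (p2 (p2 st))))"])
    show "wc (\<lambda>st. pr (p1 st) (pr (p1 (p2 st) - 1) (H (p1 st) (p2 (p2 st)))))"
      by (intro wc_pair wc_p1 wc_pred' wc_p1' wc_p2 hw)
    fix x
    show "G x = (if p1 (p2 x) = 0 then p2 (p2 x) else G (pr (p1 x) (pr (p1 (p2 x) - 1) (H (p1 x) (p2 (p2 x))))))"
    proof (cases "p1 (p2 x)")
      case 0 then show ?thesis by (simp add: G_def)
    next
      case (Suc k) then show ?thesis by (simp add: G_def funpow_Suc_right del: funpow.simps)
    qed
  qed (auto intro!: wc_basic)
  show ?thesis
    by (rule wc_cong[OF wc_comp[OF \<open>wc G\<close> wc_pair[OF assms(2) wc_pair[OF assms(3,4)]]]]) (simp add: G_def)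
qed

lemma wcp_ex:
  assumes P: "wcp (\<lambda>q. P (p1 q) (p2 q))" and n: "wc n"
  shows "wcp (\<lambda>x. \<exists>i<n x. P i x)"
proof -
  define G where "G st = (if \<exists>i<p2 st. P i (p1 st) then 1 else (0::nat))" for st
  have Pw: "wcp (\<lambda>st. P (p2 st - 1) (p1 st))"
    by (rule wcp_bin[OF P]) (intro wc_basic)+
  have "wc G"
  proof (rule wc_tailrec[where t = "\<lambda>st. if p2 st = 0 \<or> P (p2 st - 1) (p1 st) then 0 else 1"
        and e = "\<lambda>st. if p2 st = 0 then 0 else 1" and \<mu> = p2 and h = "\<lambda>st. pr (p1 st) (p2 st - 1)"])
    show "wc (\<lambda>st. if p2 st = 0 \<or> P (p2 st - 1) (p1 st) then 0 else 1)"
      by (intro wc_if wcp_disj wcp_eq Pw wc_basic)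
    show "wc (\<lambda>st. if p2 st = 0 then 0 else 1)"
      by (intro wc_if wcp_eq wc_basic)
    fix x
    show "G x = (if (if p2 x = 0 \<or> P (p2 x - 1) (p1 x) then 0 else 1) = (0::nat)
                 then (if p2 x = 0 then 0 else 1) else G (pr (p1 x) (p2 x - 1)))"
    proof (cases "p2 x")
      case 0 then show ?thesis by (simp add: G_def)
    next
      case (Suc k)
      have "(\<exists>i<Suc k. P i (p1 x)) \<longleftrightarrow> P k (p1 x) \<or> (\<exists>i<k. P i (p1 x))"
        using less_Suc_eq by auto
      then show ?thesis using Suc by (simp add: G_def)
    qed
  qed (auto intro!: wc_basic split: if_splits)
  show ?thesis unfolding wcp_def
    by (rule wc_cong[OF wc_comp[OF \<open>wc G\<close> wc_pair[OF wc_id n]]]) (simp add: G_def)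
qed

lemma wcp_all:
  assumes P: "wcp (\<lambda>q. P (p1 q) (p2 q))" and n: "wc n"
  shows "wcp (\<lambda>x. \<forall>i<n x. P i x)"
proof -
  have "wcp (\<lambda>x. \<not> (\<exists>i<n x. \<not> P i x))"
    by (rule wcp_not[OF wcp_ex[OF wcp_not[OF P] n]])
  then show ?thesis by simp
qed

lemma wc_div2: assumes "wc f" shows "wc (\<lambda>x. f x div 2)"
proof -
  have W: "wc (\<lambda>s. p2 s + p1 s div 2)"
  proof (rule wc_tailrec[where t = "\<lambda>s. if p1 s < 2 then 0 else 1" and h = "\<lambda>s. pr (p1 s - 2) (Suc (p2 s))"
        and e = p2 and \<mu> = p1])
    show "wc (\<lambda>s. if p1 s < 2 then 0 else 1)" by (intro wc_if wcp_less wc_basic)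
    show "wc (\<lambda>s. pr (p1 s - 2) (Suc (p2 s)))" by (intro wc_pair wc_sub wc_basic)
    fix x
    show "p2 x + p1 x div 2 = (if (if p1 x < 2 then 0 else 1) = (0::nat) then p2 x
           else p2 (pr (p1 x - 2) (Suc (p2 x))) + p1 (pr (p1 x - 2) (Suc (p2 x))) div 2)"
      by (cases "p1 x < 2") (auto simp: div_if)
  qed (auto intro!: wc_basic split: if_splits)
  show ?thesis by (rule wc_cong[OF wc_comp[OF W wc_pair[OF assms wc_const[of 0]]]]) simp
qed

lemma wcp_even: assumes "wc f" shows "wcp (\<lambda>x. even (f x))"
proof -
  have "wcp (\<lambda>x. f x = f x div 2 + f x div 2)"
    by (intro wcp_eq wc_add wc_div2 assms)
  moreover have "even n \<longleftrightarrow> n = n div 2 + n div 2" for n :: nat by presburger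
  ultimately show ?thesis by simp
qed

lemma wc_pow2: assumes "wc f" shows "wc (\<lambda>x. 2 ^ f x)"
proof -
  have H: "wc (\<lambda>q. p2 q + p2 q)" by (intro wc_add wc_basic)
  have "wc (\<lambda>x. ((\<lambda>v. v + v) ^^ f x) 1)"
    using wc_iter[where H="\<lambda>a v. v + v", OF H wc_const assms wc_const] by simp
  moreover have "((\<lambda>v. v + v) ^^ k) 1 = (2::nat) ^ k" for k
    by (induction k) auto
  ultimately show ?thesis by simp
qed

lemma wc_plen: "wc plen"
proof -
  have W: "wc (\<lambda>s. p2 s + plen (p1 s))"
  proof (rule wc_tailrec[where t = "\<lambda>s. if p1 s < 2 then 0 else 1" and h = "\<lambda>s. pr (p1 s div 2) (Suc (p2 s))"
        and e = "\<lambda>s. Suc (p2 s)" and \<mu> = p1])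
    show "wc (\<lambda>s. if p1 s < 2 then 0 else 1)" by (intro wc_if wcp_less wc_basic)
    show "wc (\<lambda>s. pr (p1 s div 2) (Suc (p2 s)))" by (intro wc_pair wc_div2 wc_basic)
    fix x
    show "p2 x + plen (p1 x) = (if (if p1 x < 2 then 0 else 1) = (0::nat) then Suc (p2 x)
           else p2 (pr (p1 x div 2) (Suc (p2 x))) + plen (p1 (pr (p1 x div 2) (Suc (p2 x)))))"
      by (cases "p1 x < 2") auto
  qed (auto intro!: wc_basic split: if_splits)
  show ?thesis by (rule wc_cong[OF wc_comp[OF W wc_pair[OF wc_id wc_const[of 0]]]]) simp
qed

lemma wcp_cong: "wcp P \<Longrightarrow> (\<And>x. P x = Q x) \<Longrightarrow> wcp Q"
proof -
  assume "wcp P" "\<And>x. P x = Q x"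
  then have "P = Q" by (simp add: fun_eq_iff)
  with \<open>wcp P\<close> show ?thesis by simp
qed

definition tl_c :: "nat \<Rightarrow> nat" where "tl_c n = p2 (n - 1)"
definition hd_c :: "nat \<Rightarrow> nat" where "hd_c n = p1 (n - 1)"
definition dropc :: "nat \<Rightarrow> nat \<Rightarrow> nat" where "dropc k c = (tl_c ^^ k) c"

lemma p2_0: "p2 0 = 0"
  by (simp add: p2_def prod_decode_def prod_decode_aux.simps)

lemma tl_c_0: "tl_c 0 = 0" by (simp add: tl_c_def p2_0)

lemma dropc_0: "dropc k 0 = 0"
  unfolding dropc_def by (induction k) (auto simp: tl_c_0)

lemma p2_le: "p2 n \<le> n"
  using le_prod_encode_2[where a = "p1 n" and b = "p2 n"] pr_p[of n] by (simp add: pr_def)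

lemma tl_c_less: "c \<noteq> 0 \<Longrightarrow> tl_c c < c"
  using p2_le[of "c - 1"] by (simp add: tl_c_def)

lemma list_decode_Suc: "list_decode (Suc m) = p1 m # list_decode (p2 m)"
  by (simp add: p1_def p2_def split: prod.split)

lemma drop_lemma:
  "(i < length (list_decode c) \<longleftrightarrow> dropc i c \<noteq> 0) \<and>
   (i < length (list_decode c) \<longrightarrow> list_decode c ! i = hd_c (dropc i c))"
proof (induction i arbitrary: c)
  case 0
  show ?case by (cases c) (auto simp: dropc_def hd_c_def list_decode_Suc list_decode.simps(1) simp del: list_decode.simps(2))
next
  case (Suc i)
  note IH = Suc.IH
  show ?case
  proof (cases c)
    case 0 then show ?thesis by (simp add: dropc_0 del: list_decode.simps(2))
  next
    case (Suc m)
    have d: "dropc (Suc i) c = dropc i (p2 m)"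
      by (simp add: dropc_def funpow_Suc_right tl_c_def Suc del: funpow.simps)
    then show ?thesis using IH[of "p2 m"] Suc by (simp add: list_decode_Suc del: list_decode.simps)
  qed
qed

lemma wc_tl_c': "wc f \<Longrightarrow> wc (\<lambda>x. tl_c (f x))"
  unfolding tl_c_def by (intro wc_basic)
lemma wc_hd_c': "wc f \<Longrightarrow> wc (\<lambda>x. hd_c (f x))"
  unfolding hd_c_def by (intro wc_basic)

lemma wc_dropc': assumes "wc f" "wc g" shows "wc (\<lambda>x. dropc (f x) (g x))"
proof -
  have H: "wc (\<lambda>q. tl_c (p2 q))" by (intro wc_tl_c' wc_basic)
  show ?thesis
    using wc_iter[where H = "\<lambda>a v. tl_c v", OF H wc_const[of 0] assms] by (simp add: dropc_def)
qed

function lkc :: "nat \<Rightarrow> nat \<Rightarrow> nat" where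
  "lkc r c = (if c = 0 then 0 else if p1 (hd_c c) = r then p2 (hd_c c) else lkc r (tl_c c))"
  by pat_completeness auto
termination by (relation "measure snd") (auto simp: tl_c_less)

declare lkc.simps[simp del]

lemma wc_lkc: "wc (\<lambda>s. lkc (p1 s) (p2 s))"
proof (rule wc_tailrec[where t = "\<lambda>s. if p2 s = 0 \<or> p1 (hd_c (p2 s)) = p1 s then 0 else 1"
      and e = "\<lambda>s. if p2 s = 0 then 0 else p2 (hd_c (p2 s))" and h = "\<lambda>s. pr (p1 s) (tl_c (p2 s))"
      and \<mu> = p2])
  show "wc (\<lambda>s. if p2 s = 0 \<or> p1 (hd_c (p2 s)) = p1 s then 0 else 1)"
    by (intro wc_if wcp_disj wcp_eq wc_hd_c' wc_basic)
  show "wc (\<lambda>s. if p2 s = 0 then 0 else p2 (hd_c (p2 s)))"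
    by (intro wc_if wcp_eq wc_hd_c' wc_basic)
  show "wc (\<lambda>s. pr (p1 s) (tl_c (p2 s)))"
    by (intro wc_pair wc_tl_c' wc_basic)
  fix x
  show "lkc (p1 x) (p2 x) = (if (if p2 x = 0 \<or> p1 (hd_c (p2 x)) = p1 x then 0 else 1) = (0::nat)
     then if p2 x = 0 then 0 else p2 (hd_c (p2 x)) else lkc (p1 (pr (p1 x) (tl_c (p2 x)))) (p2 (pr (p1 x) (tl_c (p2 x)))))"
    by (subst lkc.simps) auto
next
  fix x :: nat
  assume "(if p2 x = 0 \<or> p1 (hd_c (p2 x)) = p1 x then 0 else 1) \<noteq> (0::nat)"
  then show "p2 (pr (p1 x) (tl_c (p2 x))) < p2 x" by (auto simp: tl_c_less split: if_splits)
qed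

lemma wc_lkc': "wc f \<Longrightarrow> wc g \<Longrightarrow> wc (\<lambda>x. lkc (f x) (g x))"
  by (rule wc_bin[OF wc_lkc])

definition consc :: "nat \<Rightarrow> nat \<Rightarrow> nat \<Rightarrow> nat" where "consc k v c = Suc (pr (pr k v) c)"

lemma lkc_0: "lkc r 0 = 0" by (subst lkc.simps) simp

lemma lkc_cons: "lkc r (consc k v c) = (if k = r then v else lkc r c)"
  by (subst lkc.simps) (simp add: consc_def hd_c_def tl_c_def)

definition stepc :: "nat \<Rightarrow> nat \<Rightarrow> nat" where
  "stepc g s = (let d = dropc (p1 s) g; i = hd_c d; a = i div 2 in
    if d = 0 then s
    else if even i then pr (Suc (p1 s)) (consc a (Suc (lkc a (p2 s))) (p2 s))
    else if lkc (p1 a) (p2 s) = 0 then pr (p2 a) (p2 s)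
    else pr (Suc (p1 s)) (consc (p1 a) (lkc (p1 a) (p2 s) - 1) (p2 s)))"

lemma wc_stepc: "wc (\<lambda>q. stepc (p1 q) (p2 q))"
  unfolding stepc_def Let_def consc_def
  by (intro wc_if wcp_eq wcp_even wc_div2 wc_lkc' wc_dropc' wc_hd_c' wc_basic)

definition init :: "nat \<Rightarrow> nat" where "init x = pr 0 (consc 0 x 0)"

definition simc :: "nat \<Rightarrow> nat \<Rightarrow> nat \<Rightarrow> nat" where "simc g x t = (stepc g ^^ t) (init x)"

lemma wc_simc': assumes "wc a" "wc b" "wc c" shows "wc (\<lambda>x. simc (a x) (b x) (c x))"
proof -
  have "wc (\<lambda>x. init (b x))" unfolding init_def consc_def by (intro wc_basic assms)
  from wc_iter[where H = stepc, OF wc_stepc assms(1) assms(3) this] show ?thesis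
    by (simp add: simc_def)
qed

definition rep :: "nat \<Rightarrow> config \<Rightarrow> bool" where
  "rep s cfg \<longleftrightarrow> p1 s = fst cfg \<and> (\<forall>r. lkc r (p2 s) = snd cfg r)"

lemma decode_odd: "\<not> even n \<Longrightarrow> decode_instr n = DEC (p1 (n div 2)) (p2 (n div 2))"
  by (simp add: decode_instr_def p1_def p2_def split: prod.split)

lemma decode_even: "even n \<Longrightarrow> decode_instr n = INC (n div 2)"
  by (simp add: decode_instr_def)

lemma rep_step:
  assumes r: "rep s (pc, R)"
  shows "rep (stepc g s) (step (decode_prog g) (pc, R))"
proof -
  have pc: "p1 s = pc" and R: "\<And>r. lkc r (p2 s) = R r" using r by (auto simp: rep_def)
  define d where "d = dropc pc g"
  define i where "i = hd_c d"
  have len: "length (decode_prog g) = length (list_decode g)" by (simp add: decode_prog_def)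
  have dl: "pc < length (list_decode g) \<longleftrightarrow> d \<noteq> 0" and
       nth: "pc < length (list_decode g) \<Longrightarrow> list_decode g ! pc = i"
    using drop_lemma[of pc g] by (auto simp: d_def i_def)
  show ?thesis
  proof (cases "d = 0")
    case True
    then have "stepc g s = s" by (simp add: stepc_def pc d_def[symmetric])
    moreover have "step (decode_prog g) (pc, R) = (pc, R)" using True dl len by (simp add: step_out)
    ultimately show ?thesis using r by simp
  next
    case False
    then have lt: "pc < length (decode_prog g)" using dl len by simp
    have ins: "decode_prog g ! pc = decode_instr i" using lt nth len by (simp add: decode_prog_def)
    show ?thesis
    proof (cases "even i")
      case True
      have "stepc g s = pr (Suc pc) (consc (i div 2) (Suc (lkc (i div 2) (p2 s))) (p2 s))"
        using False True by (simp add: stepc_def pc d_def[symmetric] i_def[symmetric] Let_def)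
      moreover have "step (decode_prog g) (pc, R) = (Suc pc, R(i div 2 := Suc (R (i div 2))))"
        using lt ins True by (simp add: step_def decode_even)
      ultimately show ?thesis using R by (simp add: rep_def lkc_cons)
    next
      case odd: False
      show ?thesis
      proof (cases "R (p1 (i div 2)) = 0")
        case True
        have "stepc g s = pr (p2 (i div 2)) (p2 s)"
          using False odd True R by (simp add: stepc_def pc d_def[symmetric] i_def[symmetric] Let_def)
        moreover have "step (decode_prog g) (pc, R) = (p2 (i div 2), R)"
          using lt ins odd True by (simp add: step_def decode_odd)
        ultimately show ?thesis using R by (simp add: rep_def)
      next
        case nz: False
        have "stepc g s = pr (Suc pc) (consc (p1 (i div 2)) (lkc (p1 (i div 2)) (p2 s) - 1) (p2 s))"
          using False odd nz R by (simp add: stepc_def pc d_def[symmetric] i_def[symmetric] Let_def)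
        moreover have "step (decode_prog g) (pc, R) = (Suc pc, R(p1 (i div 2) := R (p1 (i div 2)) - 1))"
          using lt ins odd nz by (simp add: step_def decode_odd)
        ultimately show ?thesis using R by (simp add: rep_def lkc_cons)
      qed
    qed
  qed
qed

lemma rep_run: "rep (simc g x t) (run g x t)"
proof (induction t)
  case 0
  show ?case by (simp add: simc_def run_def rep_def init_def lkc_cons lkc_0)
next
  case (Suc t)
  obtain pc R where c: "run g x t = (pc, R)" by fastforce
  have "simc g x (Suc t) = stepc g (simc g x t)" by (simp add: simc_def)
  moreover have "run g x (Suc t) = step (decode_prog g) (run g x t)" by (simp add: run_def)
  ultimately show ?case using rep_step[of "simc g x t" pc R g] Suc c by simp
qed

lemma halted_sim: "halted g (run g x t) \<longleftrightarrow> dropc (p1 (simc g x t)) g = 0"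
proof -
  have "p1 (simc g x t) = fst (run g x t)" using rep_run[of g x t] by (simp add: rep_def)
  then show ?thesis using drop_lemma[of "fst (run g x t)" g]
    by (auto simp: halted_def decode_prog_def)
qed

lemma out_sim: "snd (run g x t) 0 = lkc 0 (p2 (simc g x t))"
  using rep_run[of g x t] by (simp add: rep_def)

lemma wcp_halted: assumes "wc a" "wc b" "wc c"
  shows "wcp (\<lambda>x. halted (a x) (run (a x) (b x) (c x)))"
  by (rule wcp_cong[OF wcp_eq[OF wc_dropc'[OF wc_p1'[OF wc_simc'[OF assms]] assms(1)] wc_const[of 0]]])
     (simp add: halted_sim)

lemma wc_out: assumes "wc a" "wc b" "wc c"
  shows "wc (\<lambda>x. snd (run (a x) (b x) (c x)) 0)"
  by (rule wc_cong[OF wc_lkc'[OF wc_const[of 0] wc_p2'[OF wc_simc'[OF assms]]]]) (simp add: out_sim)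

lemma run_add: "run g x (n + k) = (step (decode_prog g) ^^ k) (run g x n)"
  unfolding run_def by (subst add.commute) (simp add: funpow_add)

lemma halted_mono: "halted g (run g x n) \<Longrightarrow> n \<le> m \<Longrightarrow> run g x m = run g x n"
  using run_add[of g x n "m - n"] steps_halted[of "decode_prog g" "run g x n" "m - n"]
  by (simp add: halted_def)

lemma computable_wc: assumes "computable f" shows "wc f"
proof -
  obtain g where g: "\<And>x. phi g x = Some (f x)" using assms unfolding computable_def by blast
  have ex: "\<exists>n. halted g (run g x n)" for x using g[of x] unfolding phi_def by (auto split: if_splits)
  have fx: "f x = snd (run g x (LEAST n. halted g (run g x n))) 0" for x
    using g[of x] ex[of x] unfolding phi_def by simp
  define T where "T st = (if halted g (run g (p1 st) (p2 st)) then 0 else 1::nat)" for st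
  define Hh where "Hh st = pr (p1 st) (Suc (p2 st))" for st
  have it: "(Hh ^^ n) st = pr (p1 st) (p2 st + n)" for n st
    by (induction n) (auto simp: Hh_def)
  have trm: "\<exists>n. T ((Hh ^^ n) st) = 0" for st
  proof -
    obtain n0 where n0: "halted g (run g (p1 st) n0)" using ex by blast
    have "run g (p1 st) (p2 st + n0) = run g (p1 st) n0" by (rule halted_mono[OF n0]) simp
    then show ?thesis using n0 by (intro exI[of _ n0]) (simp add: T_def it)
  qed
  have wl: "wloop T Hh (pr x 0) = pr x (LEAST n. halted g (run g x n))" for x
    unfolding wloop_def it by (simp add: T_def)
  have wT: "wc T" unfolding T_def by (intro wc_if wcp_halted wc_basic)
  have wH: "wc Hh" unfolding Hh_def by (intro wc_basic)
  have ww: "wc (\<lambda>x. wloop T Hh (pr x 0))"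
    by (rule wc_comp[OF wc_wloop[OF wT wH trm] wc_pair[OF wc_id wc_const]])
  show ?thesis
    by (rule wc_cong[OF wc_out[OF wc_const[of g] wc_id wc_p2'[OF ww]]]) (simp add: wl fx)
qed

lemma wcp_comp: "wcp P \<Longrightarrow> wc f \<Longrightarrow> wcp (\<lambda>x. P (f x))"
  unfolding wcp_def by (rule wc_comp[where f = "\<lambda>x. if P x then 1 else 0"])

lemma decidable_wcp: "decidable A \<Longrightarrow> wcp (\<lambda>x. x \<in> A)"
  unfolding decidable_def wcp_def by (rule computable_wc)

lemma wcp_decidable: "wcp (\<lambda>x. x \<in> A) \<Longrightarrow> decidable A"
  unfolding decidable_def wcp_def by (rule wc_computable)

lemma halted_same: "halted g (run g w s) \<Longrightarrow> s \<le> s' \<Longrightarrow>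
   halted g (run g w s') \<and> snd (run g w s') 0 = snd (run g w s) 0"
  using halted_mono[of g w s s'] by simp

lemma phi_Some: "phi g w = Some v \<longleftrightarrow> (\<exists>t. halted g (run g w t) \<and> snd (run g w t) 0 = v)"
proof
  assume a: "phi g w = Some v"
  then have ex: "\<exists>n. halted g (run g w n)" unfolding phi_def by (auto split: if_splits)
  then have "halted g (run g w (LEAST n. halted g (run g w n)))" by (rule LeastI_ex)
  moreover have "snd (run g w (LEAST n. halted g (run g w n))) 0 = v" using a ex unfolding phi_def by simp
  ultimately show "\<exists>t. halted g (run g w t) \<and> snd (run g w t) 0 = v" by blast
next
  assume "\<exists>t. halted g (run g w t) \<and> snd (run g w t) 0 = v"
  then obtain t where t: "halted g (run g w t)" "snd (run g w t) 0 = v" by blast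
  let ?m = "LEAST n. halted g (run g w n)"
  have hm: "halted g (run g w ?m)" using t(1) by (rule LeastI)
  have "?m \<le> t" using t(1) by (rule Least_le)
  then have e: "run g w t = run g w ?m" by (rule halted_mono[OF hm])
  have ex: "\<exists>n. halted g (run g w n)" using t(1) by blast
  have "phi g w = Some (snd (run g w ?m) 0)" unfolding phi_def using ex by (simp only: if_True)
  then show "phi g w = Some v" using t(2) e by simp
qed

definition Agree :: "nat \<Rightarrow> nat \<Rightarrow> nat \<Rightarrow> nat \<Rightarrow> bool" where
  "Agree g x y s \<longleftrightarrow>
    (halted g (run g (p1 y) (p2 y)) \<longrightarrow> halted x (run x (p1 y) s) \<and>
        snd (run g (p1 y) (p2 y)) 0 = snd (run x (p1 y) s) 0) \<and>
    (halted x (run x (p1 y) (p2 y)) \<longrightarrow> halted g (run g (p1 y) s) \<and>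
        snd (run x (p1 y) (p2 y)) 0 = snd (run g (p1 y) s) 0)"

lemma Agree_mono: "Agree g x y s \<Longrightarrow> s \<le> s' \<Longrightarrow> Agree g x y s'"
  unfolding Agree_def using halted_same[of x "p1 y" s s'] halted_same[of g "p1 y" s s'] by auto

lemma one_side:
  assumes "\<forall>w. phi g w = phi x w"
  shows "\<exists>s. halted g (run g w t) \<longrightarrow> halted x (run x w s) \<and> snd (run g w t) 0 = snd (run x w s) 0"
proof (cases "halted g (run g w t)")
  case True
  then have "phi g w = Some (snd (run g w t) 0)" using phi_Some by blast
  then have "phi x w = Some (snd (run g w t) 0)" using assms by simp
  then obtain s where "halted x (run x w s)" "snd (run x w s) 0 = snd (run g w t) 0"
    unfolding phi_Some by blast
  then show ?thesis by auto
qed simp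

lemma eq_Agree: "phi g = phi x \<Longrightarrow> \<forall>y. \<exists>s. Agree g x y s"
proof -
  assume e: "phi g = phi x"
  show "\<forall>y. \<exists>s. Agree g x y s"
  proof
    fix y
    have e1: "\<forall>w. phi g w = phi x w" using e by simp
    have e2: "\<forall>w. phi x w = phi g w" using e by simp
    obtain s1 where s1: "halted g (run g (p1 y) (p2 y)) \<longrightarrow> halted x (run x (p1 y) s1) \<and>
        snd (run g (p1 y) (p2 y)) 0 = snd (run x (p1 y) s1) 0"
      using one_side[OF e1] by blast
    obtain s2 where s2: "halted x (run x (p1 y) (p2 y)) \<longrightarrow> halted g (run g (p1 y) s2) \<and>
        snd (run x (p1 y) (p2 y)) 0 = snd (run g (p1 y) s2) 0"
      using one_side[OF e2] by blast
    have c1: "halted g (run g (p1 y) (p2 y)) \<longrightarrow> halted x (run x (p1 y) (s1 + s2)) \<and>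
        snd (run g (p1 y) (p2 y)) 0 = snd (run x (p1 y) (s1 + s2)) 0"
    proof
      assume h: "halted g (run g (p1 y) (p2 y))"
      have a: "halted x (run x (p1 y) s1)" "snd (run g (p1 y) (p2 y)) 0 = snd (run x (p1 y) s1) 0"
        using s1 h by blast+
      have "halted x (run x (p1 y) (s1 + s2)) \<and> snd (run x (p1 y) (s1 + s2)) 0 = snd (run x (p1 y) s1) 0"
        by (rule halted_same[OF a(1)]) simp
      then show "halted x (run x (p1 y) (s1 + s2)) \<and>
        snd (run g (p1 y) (p2 y)) 0 = snd (run x (p1 y) (s1 + s2)) 0" using a(2) by simp
    qed
    have c2: "halted x (run x (p1 y) (p2 y)) \<longrightarrow> halted g (run g (p1 y) (s1 + s2)) \<and>
        snd (run x (p1 y) (p2 y)) 0 = snd (run g (p1 y) (s1 + s2)) 0"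
    proof
      assume h: "halted x (run x (p1 y) (p2 y))"
      have a: "halted g (run g (p1 y) s2)" "snd (run x (p1 y) (p2 y)) 0 = snd (run g (p1 y) s2) 0"
        using s2 h by blast+
      have "halted g (run g (p1 y) (s1 + s2)) \<and> snd (run g (p1 y) (s1 + s2)) 0 = snd (run g (p1 y) s2) 0"
        by (rule halted_same[OF a(1)]) simp
      then show "halted g (run g (p1 y) (s1 + s2)) \<and>
        snd (run x (p1 y) (p2 y)) 0 = snd (run g (p1 y) (s1 + s2)) 0" using a(2) by simp
    qed
    have "Agree g x y (s1 + s2)" unfolding Agree_def using c1 c2 by (rule conjI)
    then show "\<exists>s. Agree g x y s" by blast
  qed
qed

lemma Agree_eq: "\<forall>y. \<exists>s. Agree g x y s \<Longrightarrow> phi g = phi x"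
proof -
  assume A: "\<forall>y. \<exists>s. Agree g x y s"
  have d1: "phi x w = Some v" if a: "phi g w = Some v" for w v
  proof -
    obtain t where t: "halted g (run g w t)" "snd (run g w t) 0 = v" using phi_Some[THEN iffD1, OF a] by blast
    obtain s where "Agree g x (pr w t) s" using A by blast
    then have "halted g (run g w t) \<longrightarrow> halted x (run x w s) \<and> snd (run g w t) 0 = snd (run x w s) 0"
      unfolding Agree_def p1_pr p2_pr by (rule conjunct1)
    then have "halted x (run x w s) \<and> snd (run x w s) 0 = v" using t by simp
    then show ?thesis by (intro phi_Some[THEN iffD2]) blast
  qed
  have d2: "phi g w = Some v" if a: "phi x w = Some v" for w v
  proof -
    obtain t where t: "halted x (run x w t)" "snd (run x w t) 0 = v" using phi_Some[THEN iffD1, OF a] by blast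
    obtain s where "Agree g x (pr w t) s" using A by blast
    then have "halted x (run x w t) \<longrightarrow> halted g (run g w s) \<and> snd (run x w t) 0 = snd (run g w s) 0"
      unfolding Agree_def p1_pr p2_pr by (rule conjunct2)
    then have "halted g (run g w s) \<and> snd (run g w s) 0 = v" using t by simp
    then show ?thesis by (intro phi_Some[THEN iffD2]) blast
  qed
  show "phi g = phi x"
  proof
    fix w
    show "phi g w = phi x w"
    proof (cases "phi g w")
      case None
      show ?thesis
      proof (cases "phi x w")
        case None
        then show ?thesis using \<open>phi g w = None\<close> by simp
      next
        case (Some v)
        then have "phi g w = Some v" by (rule d2)
        then show ?thesis using \<open>phi g w = None\<close> by simp
      qed
    next
      case (Some v)
      then show ?thesis using d1 by simp
    qed
  qed
qed


lemma phi_eq_Agree: "phi g = phi x \<longleftrightarrow> (\<forall>y. \<exists>s. Agree g x y s)"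
  using eq_Agree Agree_eq by blast

lemma swap:
  fixes A :: "nat \<Rightarrow> bool" and Ag :: "nat \<Rightarrow> nat \<Rightarrow> nat \<Rightarrow> bool"
  assumes mono: "\<And>g y s s'. Ag g y s \<Longrightarrow> s \<le> s' \<Longrightarrow> Ag g y s'"
  shows "(\<exists>g<N. A g \<and> (\<forall>y. \<exists>s. Ag g y s)) \<longleftrightarrow> (\<forall>y. \<exists>z. \<exists>g<N. A g \<and> (\<forall>y'<Suc y. Ag g y' z))"
proof
  assume "\<exists>g<N. A g \<and> (\<forall>y. \<exists>s. Ag g y s)"
  then obtain g where g: "g < N" "A g" "\<forall>y. \<exists>s. Ag g y s" by blast
  have "\<exists>z. \<forall>y'<Suc y. Ag g y' z" for y
  proof (induction y)
    case 0
    obtain s where "Ag g 0 s" using g by blast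
    then show ?case by (intro exI[of _ s]) auto
  next
    case (Suc y)
    obtain z where z: "\<forall>y'<Suc y. Ag g y' z" using Suc by blast
    obtain s where s: "Ag g (Suc y) s" using g by blast
    have "\<forall>y'<Suc (Suc y). Ag g y' (max z s)"
    proof (intro allI impI)
      fix y' assume "y' < Suc (Suc y)"
      then consider "y' < Suc y" | "y' = Suc y" by linarith
      then show "Ag g y' (max z s)"
      proof cases
        case 1
        then have "Ag g y' z" using z by blast
        then show ?thesis by (rule mono) simp
      next
        case 2
        then show ?thesis using mono[OF s, of "max z s"] by simp
      qed
    qed
    then show ?case by blast
  qed
  then show "\<forall>y. \<exists>z. \<exists>g<N. A g \<and> (\<forall>y'<Suc y. Ag g y' z)" using g by blast
next
  assume R: "\<forall>y. \<exists>z. \<exists>g<N. A g \<and> (\<forall>y'<Suc y. Ag g y' z)"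
  show "\<exists>g<N. A g \<and> (\<forall>y. \<exists>s. Ag g y s)"
  proof (rule ccontr)
    assume "\<not> (\<exists>g<N. A g \<and> (\<forall>y. \<exists>s. Ag g y s))"
    then have bad: "\<And>g. g < N \<Longrightarrow> A g \<Longrightarrow> \<exists>y. \<forall>s. \<not> Ag g y s" by blast
    define yb where "yb g = (SOME y. \<forall>s. \<not> Ag g y s)" for g
    have ybad: "\<not> Ag g (yb g) s" if "g < N" "A g" for g s
    proof -
      have "\<forall>s. \<not> Ag g (yb g) s" unfolding yb_def by (rule someI_ex) (rule bad[OF that])
      then show ?thesis by blast
    qed
    define Y where "Y = (\<Sum>g<N. yb g)"
    have le: "g < N \<Longrightarrow> yb g \<le> Y" for g
      unfolding Y_def by (rule member_le_sum) auto
    obtain z g where g: "g < N" "A g" "\<forall>y'<Suc Y. Ag g y' z" using R by blast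
    have "yb g < Suc Y" using le[OF g(1)] by simp
    then have "Ag g (yb g) z" using g(3) by blast
    then show False using ybad[OF g(1,2)] by blast
  qed
qed

lemma lt_pow_plen: "n < 2 ^ plen n"
proof (induction n rule: plen.induct)
  case (1 n)
  show ?case
  proof (cases "n < 2")
    case True then show ?thesis by simp
  next
    case False
    then have "n div 2 < 2 ^ plen (n div 2)" using 1 by simp
    then show ?thesis using False by simp
  qed
qed

lemma wcp_Agree:
  assumes "wc a" "wc b" "wc c" "wc d"
  shows "wcp (\<lambda>x. Agree (a x) (b x) (c x) (d x))"
  unfolding Agree_def
  by (intro wcp_conj wcp_imp wcp_halted wcp_eq wc_out wc_p1' wc_p2' assms)

theorem mainTheorem10:
  fixes L \<psi> :: "nat set"
  assumes "computably_succinct L"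
    and "functional_prop \<psi>"
    and "captures L \<psi>"
  shows "Pi02 \<psi>"
proof -
  obtain F0 where F0c: "computable F0" and
    sc: "\<forall>g. (\<exists>g'\<in>L. phi g' = phi g) \<longrightarrow> (\<exists>g'\<in>L. phi g' = phi g \<and> plen g' \<le> F0 (plen g))"
    using assms(1) unfolding computably_succinct_def by blast
  have decL: "decidable L" and Lpsi: "\<forall>g\<in>L. g \<in> \<psi>" and cov: "\<forall>g'. g' \<in> \<psi> \<longrightarrow> (\<exists>g\<in>L. phi g = phi g')"
    using assms(3) unfolding captures_def by auto
  have fp: "\<And>g g'. phi g = phi g' \<Longrightarrow> (g \<in> \<psi> \<longleftrightarrow> g' \<in> \<psi>)"
    using assms(2) unfolding functional_prop_def by blast
  define N where "N x = (2::nat) ^ F0 (plen x)" for x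
  define Q where "Q x y z = (\<exists>g'<N x. g' \<in> L \<and> (\<forall>y'<Suc y. Agree g' x y' z))" for x y z
  define R where "R = {q. Q (p1 q) (p1 (p2 q)) (p2 (p2 q))}"
  have char: "x \<in> \<psi> \<longleftrightarrow> (\<exists>g'<N x. g' \<in> L \<and> phi g' = phi x)" for x
  proof
    assume "x \<in> \<psi>"
    then obtain g where "g \<in> L" "phi g = phi x" using cov by blast
    then obtain g' where g': "g' \<in> L" "phi g' = phi x" "plen g' \<le> F0 (plen x)" using sc by blast
    have "g' < 2 ^ plen g'" by (rule lt_pow_plen)
    also have "\<dots> \<le> N x" unfolding N_def using g'(3) by (simp add: power_increasing)
    finally show "\<exists>g'<N x. g' \<in> L \<and> phi g' = phi x" using g' by blast
  next
    assume "\<exists>g'<N x. g' \<in> L \<and> phi g' = phi x"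
    then obtain g' where "g' \<in> L" "phi g' = phi x" by blast
    then show "x \<in> \<psi>" using Lpsi fp by blast
  qed
  have main: "x \<in> \<psi> \<longleftrightarrow> (\<forall>y. \<exists>z. Q x y z)" for x
  proof -
    have "x \<in> \<psi> \<longleftrightarrow> (\<exists>g'<N x. g' \<in> L \<and> (\<forall>y. \<exists>s. Agree g' x y s))"
      using char phi_eq_Agree by simp
    also have "\<dots> \<longleftrightarrow> (\<forall>y. \<exists>z. \<exists>g'<N x. g' \<in> L \<and> (\<forall>y'<Suc y. Agree g' x y' z))"
      by (rule swap[where Ag = "\<lambda>g y s. Agree g x y s" and A = "\<lambda>g. g \<in> L"]) (rule Agree_mono)
    finally show ?thesis unfolding Q_def .
  qed
  have wN: "wc (\<lambda>q. N (p1 q))"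
    unfolding N_def by (rule wc_pow2[OF wc_comp[OF computable_wc[OF F0c] wc_comp[OF wc_plen wc_p1]]])
  have wA: "wcp (\<lambda>q. \<forall>y'<Suc (p1 (p2 (p2 q))). Agree (p1 q) (p1 (p2 q)) y' (p2 (p2 (p2 q))))"
    by (rule wcp_all[where P = "\<lambda>j s. Agree (p1 s) (p1 (p2 s)) j (p2 (p2 (p2 s)))"
          and n = "\<lambda>s. Suc (p1 (p2 (p2 s)))"])
       (intro wcp_Agree wc_basic)+
  have wL: "wcp (\<lambda>q. p1 q \<in> L)" by (rule wcp_comp[OF decidable_wcp[OF decL] wc_p1])
  have wQ: "wcp (\<lambda>q. Q (p1 q) (p1 (p2 q)) (p2 (p2 q)))"
    unfolding Q_def
    by (rule wcp_ex[where P = "\<lambda>i q. i \<in> L \<and> (\<forall>y'<Suc (p1 (p2 q)). Agree i (p1 q) y' (p2 (p2 q)))"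
          and n = "\<lambda>q. N (p1 q)"])
       (simp_all add: wN wcp_conj[OF wL wA])
  have dec: "decidable R"
    by (rule wcp_decidable) (simp add: R_def wQ)
  have "\<forall>x. x \<in> \<psi> \<longleftrightarrow> (\<forall>y. \<exists>z. prod_encode (x, prod_encode (y, z)) \<in> R)"
    using main by (simp add: R_def pr_def[symmetric])
  then show ?thesis unfolding Pi02_def using dec by blast
qed

end
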